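(* Let $h$ be a transcendental entire function with $h(1)\neq 0$ and $h(-1)\neq 0$. For $a\in\mathbb{C}$ put $H_a(z):=\cos z\cdot h(\sin z)+a\sin z$. Then there exists an at most countable set $E\subset\mathbb{C}$ such that for every $a\in\mathbb{C}\setminus E$ and every $c\in\mathbb{C}$, any two solutions $u,v$ of the simultaneous equations $H_a(z)=c,\ H_a'(z)=0$ satisfy $\cos u=\cos v$ and $\sin u=\sin v$. *)

theory Defs
  imports "HOL-Analysis.Analysis" "HOL-Computational_Algebra.Polynomial"
begin

definition transcendental_entire :: "(complex \<Rightarrow> complex) \<Rightarrow> bool" where
  "transcendental_entire h \<longleftrightarrow> h holomorphic_on UNIV \<and> \<not> (\<exists>p. \<forall>z. h z = poly p z)"

definition Hfun :: "(complex \<Rightarrow> complex) \<Rightarrow> complex \<Rightarrow> complex \<Rightarrow> complex" where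
  "Hfun h a z = cos z * h (sin z) + a * sin z"

end

theory Submission
  imports Defs "HOL-Complex_Analysis.Complex_Analysis"
begin

lemma countable_isolated_pts:
  fixes P :: "'a::second_countable_topology set"
  assumes iso: "\<And>x. x \<in> P \<Longrightarrow> \<exists>U. open U \<and> U \<inter> P = {x}"
  shows "countable P"
proof -
  obtain B :: "'a set set" where B: "countable B" "topological_basis B"
    using ex_countable_basis by blast
  have ex: "\<exists>b. b \<in> B \<and> x \<in> b \<and> b \<inter> P = {x}" if xP: "x \<in> P" for x
  proof -
    from iso[OF xP] obtain U where U1: "open U" and U2: "U \<inter> P = {x}" by blast
    have xU: "x \<in> U" using U2 by blast
    obtain b where b: "b \<in> B" "x \<in> b" "b \<subseteq> U"
      using topological_basisE[OF B(2) U1 xU] by blast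
    have "b \<inter> P = {x}" using b(2,3) U2 xP by blast
    then show ?thesis using b(1,2) by blast
  qed
  define f where "f = (\<lambda>x. SOME b. b \<in> B \<and> x \<in> b \<and> b \<inter> P = {x})"
  have f: "f x \<in> B \<and> x \<in> f x \<and> f x \<inter> P = {x}" if "x \<in> P" for x
    unfolding f_def by (rule someI_ex[OF ex[OF that]])
  have inj: "inj_on f P"
  proof (rule inj_onI)
    fix x y assume xy: "x \<in> P" "y \<in> P" "f x = f y"
    have y1: "y \<in> f x \<inter> P" using f[OF xy(2)] xy by simp
    have y2: "f x \<inter> P = {x}" using f[OF xy(1)] by simp
    from y1 show "x = y" unfolding y2 by simp
  qed
  have "f ` P \<subseteq> B" using f by blast
  then have "countable (f ` P)" using B(1) countable_subset by blast
  then show ?thesis using countable_image_inj_on inj by blast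
qed

lemma open_fsigma_c:
  fixes S :: "complex set" assumes "open S" shows "fsigma S"
proof -
  obtain K :: "nat \<Rightarrow> complex set" where K: "\<And>n. compact (K n)" "\<Union>(range K) = S"
    using open_Union_compact_subsets[OF assms] by metis
  have "range K \<subseteq> Collect compact" using K(1) by auto
  then show ?thesis using fsigma_Union_compact[of S] K(2) by metis
qed

lemma key_isolated:
  fixes A C S :: "complex \<Rightarrow> complex"
  assumes "open \<Omega>" and holA: "A holomorphic_on \<Omega>" and holC: "C holomorphic_on \<Omega>"
    and dC: "\<And>z. z\<in>\<Omega> \<Longrightarrow> deriv C z = S z * deriv A z"
    and uv: "u\<in>\<Omega>" "v\<in>\<Omega>" and nz: "deriv A u \<noteq> 0" "deriv A v \<noteq> 0"
    and Sne: "S u \<noteq> S v" and eqA: "A u = A v" and eqC: "C u = C v"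
  shows "\<exists>N. open N \<and> (u,v) \<in> N \<and> (\<forall>u' v'. (u',v') \<in> N \<and> u'\<in>\<Omega> \<and> v'\<in>\<Omega> \<and> A u' = A v' \<and> C u' = C v' \<longrightarrow> u' = u \<and> v' = v)"
proof -
  obtain r1 where r1: "r1 > 0" "ball u r1 \<subseteq> \<Omega>" "inj_on A (ball u r1)"
    using has_complex_derivative_locally_injective[OF holA uv(1) \<open>open \<Omega>\<close> nz(1)] by blast
  obtain r2 where r2: "r2 > 0" "ball v r2 \<subseteq> \<Omega>" "inj_on A (ball v r2)"
    using has_complex_derivative_locally_injective[OF holA uv(2) \<open>open \<Omega>\<close> nz(2)] by blast
  define B1 where "B1 = ball u r1"
  define B2 where "B2 = ball v r2"
  have hA1: "A holomorphic_on B1" using holA r1 B1_def holomorphic_on_subset by blast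
  have hA2: "A holomorphic_on B2" using holA r2 B2_def holomorphic_on_subset by blast
  obtain g1 where g1: "g1 holomorphic_on (A ` B1)" "\<And>z. z \<in> B1 \<Longrightarrow> deriv A z * deriv g1 (A z) = 1"
     "\<And>z. z \<in> B1 \<Longrightarrow> g1 (A z) = z"
    using holomorphic_has_inverse[OF hA1 _ ] r1 B1_def by (metis open_ball)
  obtain g2 where g2: "g2 holomorphic_on (A ` B2)" "\<And>z. z \<in> B2 \<Longrightarrow> deriv A z * deriv g2 (A z) = 1"
     "\<And>z. z \<in> B2 \<Longrightarrow> g2 (A z) = z"
    using holomorphic_has_inverse[OF hA2 _ ] r2 B2_def by (metis open_ball)
  have o1: "open (A ` B1)" using open_mapping_thm3[OF hA1] r1 B1_def by simp
  have o2: "open (A ` B2)" using open_mapping_thm3[OF hA2] r2 B2_def by simp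
  define W where "W = A ` B1 \<inter> A ` B2"
  define a where "a = A u"
  have uB1: "u \<in> B1" using r1 B1_def by simp
  have vB2: "v \<in> B2" using r2 B2_def by simp
  have aW: "a \<in> W" unfolding W_def a_def using uB1 vB2 eqA by (metis IntI imageI)
  have oW: "open W" using o1 o2 W_def by auto
  have g1m: "g1 ` (A ` B1) \<subseteq> \<Omega>" using g1(3) r1 B1_def by auto
  have g2m: "g2 ` (A ` B2) \<subseteq> \<Omega>" using g2(3) r2 B2_def by auto
  define D where "D = (\<lambda>b. C (g1 b) - C (g2 b))"
  have hC1: "(C \<circ> g1) holomorphic_on (A ` B1)"
    by (rule holomorphic_on_compose_gen[OF g1(1) holC g1m])
  have hC2: "(C \<circ> g2) holomorphic_on (A ` B2)"
    by (rule holomorphic_on_compose_gen[OF g2(1) holC g2m])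
  have hD: "D holomorphic_on W"
  proof -
    have "(C \<circ> g1) holomorphic_on W" "(C \<circ> g2) holomorphic_on W"
      using hC1 hC2 unfolding W_def by (auto intro: holomorphic_on_subset)
    then have "(\<lambda>b. (C \<circ> g1) b - (C \<circ> g2) b) holomorphic_on W"
      by (intro holomorphic_on_diff)
    then show ?thesis by (simp add: D_def o_def)
  qed
  have g1a: "g1 a = u" using g1(3) uB1 a_def by simp
  have g2a: "g2 a = v" using g2(3) vB2 a_def eqA by simp
  have dg1: "g1 field_differentiable at a"
    using g1(1) o1 uB1 a_def holomorphic_on_imp_differentiable_at by blast
  have dg2: "g2 field_differentiable at a"
    using g2(1) o2 vB2 a_def eqA holomorphic_on_imp_differentiable_at by blast
  have dCu: "C field_differentiable at (g1 a)"
    using holC \<open>open \<Omega>\<close> uv g1a holomorphic_on_imp_differentiable_at by auto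
  have dCv: "C field_differentiable at (g2 a)"
    using holC \<open>open \<Omega>\<close> uv g2a holomorphic_on_imp_differentiable_at by auto
  have fc1: "(C \<circ> g1) field_differentiable at a" by (rule field_differentiable_compose[OF dg1 dCu])
  have fc2: "(C \<circ> g2) field_differentiable at a" by (rule field_differentiable_compose[OF dg2 dCv])
  have Deq: "D = (\<lambda>b. (C \<circ> g1) b - (C \<circ> g2) b)" by (simp add: D_def fun_eq_iff)
  have "deriv D a = deriv (C \<circ> g1) a - deriv (C \<circ> g2) a"
    unfolding Deq by (rule deriv_diff[OF fc1 fc2])
  also have "\<dots> = deriv C u * deriv g1 a - deriv C v * deriv g2 a"
    using deriv_chain[OF dg1 dCu] deriv_chain[OF dg2 dCv] g1a g2a by simp
  also have "\<dots> = S u * (deriv A u * deriv g1 a) - S v * (deriv A v * deriv g2 a)"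
    using dC uv by simp
  also have "\<dots> = S u - S v"
    using g1(2)[OF uB1] g2(2)[OF vB2] a_def eqA by simp
  finally have "deriv D a \<noteq> 0" using Sne by simp
  then obtain e where e: "e > 0" "ball a e \<subseteq> W" "inj_on D (ball a e)"
    using has_complex_derivative_locally_injective[OF hD aW oW] by blast
  define N where "N = (B1 \<inter> A -` ball a e) \<times> B2"
  have "continuous_on B1 A" using hA1 holomorphic_on_imp_continuous_on by blast
  then have "open (B1 \<inter> A -` ball a e)"
    using continuous_open_preimage[of B1 A "ball a e"] B1_def by simp
  then have "open N" unfolding N_def B2_def by (intro open_Times) auto
  moreover have "(u,v) \<in> N" unfolding N_def using uB1 vB2 e(1) a_def by auto
  moreover have "u' = u \<and> v' = v" if h: "(u',v') \<in> N" "A u' = A v'" "C u' = C v'" for u' v'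
  proof -
    have u'1: "u' \<in> B1" and b: "A u' \<in> ball a e" and v'2: "v' \<in> B2" using h N_def by auto
    have gu: "g1 (A u') = u'" using g1(3) u'1 by simp
    have gv: "g2 (A u') = v'" using g2(3) v'2 h(2) by simp
    have "D (A u') = 0" using gu gv h(3) D_def by simp
    moreover have "D a = 0" using g1a g2a eqC D_def by simp
    ultimately have "D (A u') = D a" by simp
    moreover have "a \<in> ball a e" using e(1) by simp
    ultimately have "A u' = a" using inj_onD[OF e(3)] b by blast
    then show ?thesis using gu gv g1a g2a by simp
  qed
  ultimately show ?thesis by blast
qed


theorem lemma2p2:
  fixes h :: "complex \<Rightarrow> complex"
  assumes "transcendental_entire h" and "h 1 \<noteq> 0" and "h (-1) \<noteq> 0"
  shows "\<exists>E :: complex set. countable E \<and>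
           (\<forall>a. a \<notin> E \<longrightarrow>
              (\<forall>c u v. Hfun h a u = c \<and> deriv (Hfun h a) u = 0 \<and>
                       Hfun h a v = c \<and> deriv (Hfun h a) v = 0
                       \<longrightarrow> cos u = cos v \<and> sin u = sin v))"
proof -
  have holh: "h holomorphic_on UNIV" using assms(1) transcendental_entire_def by blast
  have holh': "deriv h holomorphic_on UNIV" using holh holomorphic_deriv by blast
  have Dh: "\<And>w. (h has_field_derivative deriv h w) (at w)"
    using holh by (meson DERIV_deriv_iff_field_differentiable UNIV_I holomorphic_on_imp_differentiable_at open_UNIV)
  define F where "F = (\<lambda>w. (1 - w^2) * deriv h w - w * h w)"
  define \<Omega> where "\<Omega> = {z::complex. cos z \<noteq> 0}"
  define A where "A = (\<lambda>u. - F (sin u) / cos u)"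
  define C where "C = (\<lambda>u. cos u * h (sin u) + A u * sin u)"
  have sc: "\<And>z::complex. (cos z)^2 = 1 - (sin z)^2"
    by (simp add: cos_squared_eq)
  have dH: "deriv (Hfun h a) u = F (sin u) + a * cos u" for a u
  proof -
    have "(Hfun h a has_field_derivative
          (- sin u * h (sin u) + cos u * (deriv h (sin u) * cos u) + a * cos u)) (at u)"
      unfolding Hfun_def[abs_def]
      by (auto intro!: derivative_eq_intros DERIV_chain2[OF Dh] simp: algebra_simps)
    then have "deriv (Hfun h a) u = - sin u * h (sin u) + cos u * (deriv h (sin u) * cos u) + a * cos u"
      by (rule DERIV_imp_deriv)
    also have "\<dots> = F (sin u) + a * cos u"
    proof -
      have "cos u * (deriv h (sin u) * cos u) = (1 - (sin u)^2) * deriv h (sin u)"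
        by (subst sc[symmetric]) (simp add: power2_eq_square mult_ac)
      then show ?thesis unfolding F_def by (simp add: algebra_simps)
    qed
    finally show ?thesis .
  qed
  have crit_cos: "cos u \<noteq> 0" if "deriv (Hfun h a) u = 0" for a u
  proof
    assume c0: "cos u = 0"
    then have "(sin u)^2 = 1" using sc[of u] by simp
    then have "sin u = 1 \<or> sin u = -1" by (simp add: power2_eq_1_iff)
    moreover have "F (sin u) = 0" using that dH c0 by simp
    ultimately show False using assms(2,3) unfolding F_def by auto
  qed
  have crit_A: "a = A u" if "deriv (Hfun h a) u = 0" for a u
    using that crit_cos[OF that] dH unfolding A_def by (simp add: field_simps add_eq_0_iff)
  have ccos: "continuous_on UNIV (\<lambda>z::complex. cos z)" by (intro continuous_intros)
  have openO: "open \<Omega>" unfolding \<Omega>_def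
    using open_Collect_neq[OF ccos continuous_on_const[of UNIV "0::complex"]] by simp
  have holF: "F holomorphic_on UNIV" unfolding F_def
    by (intro holomorphic_intros holh' holh)
  have holA: "A holomorphic_on \<Omega>" unfolding A_def \<Omega>_def
    by (intro holomorphic_intros holomorphic_on_compose_gen[OF _ holF, unfolded o_def]) auto
  have holC: "C holomorphic_on \<Omega>" unfolding C_def
    by (intro holomorphic_intros holA holomorphic_on_compose_gen[OF _ holh, unfolded o_def]) auto
  have dC: "deriv C z = sin z * deriv A z" if "z \<in> \<Omega>" for z
  proof -
    have DA: "(A has_field_derivative deriv A z) (at z)"
      using holA openO that by (meson DERIV_deriv_iff_field_differentiable holomorphic_on_imp_differentiable_at)
    have "(C has_field_derivative
          (- sin z * h (sin z) + cos z * (deriv h (sin z) * cos z) + (deriv A z * sin z + A z * cos z))) (at z)"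
      unfolding C_def
      by (auto intro!: derivative_eq_intros DERIV_chain2[OF Dh] DA simp: algebra_simps)
    then have "deriv C z = - sin z * h (sin z) + cos z * (deriv h (sin z) * cos z) + (deriv A z * sin z + A z * cos z)"
      by (rule DERIV_imp_deriv)
    also have "\<dots> = (F (sin z) + A z * cos z) + sin z * deriv A z"
    proof -
      have "cos z * (deriv h (sin z) * cos z) = (1 - (sin z)^2) * deriv h (sin z)"
        by (subst sc[symmetric]) (simp add: power2_eq_square mult_ac)
      then show ?thesis unfolding F_def by (simp add: algebra_simps)
    qed
    also have "F (sin z) + A z * cos z = 0" using that unfolding A_def \<Omega>_def by simp
    finally show ?thesis by simp
  qed
  have cos_ctbl: "countable {z::complex. cos z = 0}"
  proof -
    have nc: "\<not> (\<lambda>z::complex. cos z) constant_on UNIV"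
    proof
      assume "(\<lambda>z::complex. cos z) constant_on UNIV"
      then obtain k where "\<And>z::complex. cos z = k" unfolding constant_on_def by blast
      from this[of 0] this[of pi] show False by simp
    qed
    have "countable {z\<in>UNIV. cos z = (0::complex)}"
      by (rule holomorphic_countable_zeros[OF _ open_UNIV connected_UNIV fsigma_UNIV nc])
         (intro holomorphic_intros)
    then show ?thesis by simp
  qed
  have OeqU: "\<Omega> = UNIV - {z. cos z = 0}" unfolding \<Omega>_def by auto
  have connO: "connected \<Omega>" unfolding OeqU
    by (rule connected_open_diff_countable[OF _ open_UNIV connected_UNIV cos_ctbl]) simp
  have uncO: "uncountable \<Omega>" unfolding OeqU
    by (rule uncountable_minus_countable[OF uncountable_UNIV_complex cos_ctbl])
  have fsO: "fsigma \<Omega>" by (rule open_fsigma_c[OF openO])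
  define Z where "Z = {u\<in>\<Omega>. deriv A u = 0}"
  have Z_ctbl: "countable Z"
  proof (cases "deriv A constant_on \<Omega> \<and> Z \<noteq> {}")
    case True
    then obtain k u0 where k: "\<And>x. x \<in> \<Omega> \<Longrightarrow> deriv A x = k" and u0: "u0 \<in> Z"
      unfolding constant_on_def by blast
    then have k0: "k = 0" using Z_def by force
    have DA0: "\<forall>x\<in>\<Omega> - {}. DERIV A x :> 0"
      using holA openO k k0
      by (metis DERIV_deriv_iff_field_differentiable Diff_empty holomorphic_on_imp_differentiable_at)
    obtain c where c: "\<And>x. x \<in> \<Omega> \<Longrightarrow> A x = c"
      using DERIV_zero_connected_constant[OF connO openO finite.emptyI
          holomorphic_on_imp_continuous_on[OF holA] DA0] by blast
    have "0 \<in> \<Omega>" "pi \<in> \<Omega>" unfolding \<Omega>_def by auto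
    then have "A 0 = c" "A pi = c" using c by auto
    moreover have "A pi = - A 0" unfolding A_def by simp
    ultimately have c0: "c = 0" by simp
    have "F (sin z) = 0" if "z \<in> \<Omega>" for z
      using c[OF that] c0 that unfolding A_def \<Omega>_def by simp
    then have "\<Omega> \<subseteq> {z. (F \<circ> sin) z = (\<lambda>_. 0) z}" by auto
    then have "uncountable {z. (F \<circ> sin) z = (\<lambda>_. 0) z}"
      using uncO countable_subset by blast
    moreover have "(F \<circ> sin) holomorphic_on UNIV"
      by (rule holomorphic_on_compose_gen[OF _ holF]) (auto intro: holomorphic_intros)
    ultimately have "F \<circ> sin = (\<lambda>_. 0)"
      using holomorphic_countable_equal_UNIV[of "F \<circ> sin" "\<lambda>_. 0"] by auto
    then have "(F \<circ> sin) (complex_of_real (pi/2)) = 0" by simp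
    then have "F 1 = 0" by (simp add: sin_of_real)
    then show ?thesis using assms(2) unfolding F_def by simp
  next
    case False
    show ?thesis
    proof (cases "Z = {}")
      case True
      then show ?thesis by simp
    next
      case F2: False
      with \<open>\<not> (deriv A constant_on \<Omega> \<and> Z \<noteq> {})\<close> have nc: "\<not> deriv A constant_on \<Omega>" by blast
      have "countable {z\<in>\<Omega>. deriv A z = 0}"
        by (rule holomorphic_countable_zeros[OF holomorphic_deriv[OF holA openO] openO connO fsO nc])
      then show ?thesis unfolding Z_def .
    qed
  qed
  define P where "P = {(u,v). u\<in>\<Omega> \<and> v\<in>\<Omega> \<and> A u = A v \<and> C u = C v \<and> deriv A u \<noteq> 0 \<and> deriv A v \<noteq> 0 \<and> sin u \<noteq> sin v}"
  have P_ctbl: "countable P"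
  proof (rule countable_isolated_pts)
    fix x assume "x \<in> P"
    then obtain u v where x: "x = (u,v)" and uv: "u\<in>\<Omega>" "v\<in>\<Omega>" "A u = A v" "C u = C v"
      "deriv A u \<noteq> 0" "deriv A v \<noteq> 0" "sin u \<noteq> sin v" unfolding P_def by blast
    obtain N where N: "open N" "(u,v) \<in> N" "\<forall>u' v'. (u',v') \<in> N \<and> u'\<in>\<Omega> \<and> v'\<in>\<Omega> \<and> A u' = A v' \<and> C u' = C v' \<longrightarrow> u' = u \<and> v' = v"
      using key_isolated[OF openO holA holC dC uv(1,2,5,6,7,3,4)] by blast
    have "N \<inter> P = {x}"
      using N \<open>x \<in> P\<close> x unfolding P_def by auto
    then show "\<exists>U. open U \<and> U \<inter> P = {x}" using N(1) by blast
  qed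
  define E where "E = insert 0 (A ` Z \<union> A ` fst ` P)"
  have "countable E" unfolding E_def using Z_ctbl P_ctbl by auto
  moreover have "cos u = cos v \<and> sin u = sin v"
    if aE: "a \<notin> E" and H: "Hfun h a u = c" "deriv (Hfun h a) u = 0"
       "Hfun h a v = c" "deriv (Hfun h a) v = 0" for a c u v
  proof -
    have cu: "cos u \<noteq> 0" and cv: "cos v \<noteq> 0" using crit_cos H by blast+
    have au: "a = A u" and av: "a = A v" using crit_A H by blast+
    have uO: "u \<in> \<Omega>" and vO: "v \<in> \<Omega>" using cu cv \<Omega>_def by auto
    have Cu: "C u = c" using H(1) au unfolding C_def Hfun_def by simp
    have Cv: "C v = c" using H(3) av unfolding C_def Hfun_def by simp
    have du: "deriv A u \<noteq> 0" using aE au uO unfolding E_def Z_def by auto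
    have dv: "deriv A v \<noteq> 0" using aE av vO unfolding E_def Z_def by auto
    have a0: "a \<noteq> 0" using aE E_def by auto
    show ?thesis
    proof (cases "sin u = sin v")
      case True
      have "a * cos u = - F (sin u)" using au cu unfolding A_def by simp
      moreover have "a * cos v = - F (sin v)" using av cv unfolding A_def by simp
      ultimately have "a * cos u = a * cos v" using True by simp
      then show ?thesis using a0 True by simp
    next
      case False
      then have "(u,v) \<in> P" unfolding P_def using uO vO au av Cu Cv du dv by auto
      then have "a \<in> E" unfolding E_def using au by force
      then show ?thesis using aE by simp
    qed
  qed
  ultimately show ?thesis by blast
qed

end
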